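(* Let $f\in\mathcal{F}$ and $V>0$. Then the FCC lattice $D_3$, the BCC lattice $D_3^*$ and the simple cubic lattice $\mathbb Z^3$ (each of volume $V$) are critical points of $L\mapsto E_f[L]$ among Bravais lattices of fixed volume $V$, i.e. the gradient of $(u,v,x,y,z)\mapsto E_f(u,v,x,y,z)$ vanishes at the parameters of each of these lattices.
   Context: Fix $V>0$ and set $C:=V^{2/3}2^{1/3}$. Every Bravais lattice $L\subset\mathbb R^3$ of covolume $V$ is parametrized by $(u,v,x,y,z)$ with $u,v>0$, $x,y,z\in\mathbb R$, via the basis $v_1=\sqrt C(1/\sqrt u,0,0)$, $v_2=\sqrt C(x/\sqrt u,v/\sqrt u,0)$, $v_3=\sqrt C(y/\sqrt u,vz/\sqrt u,u/(v\sqrt2))$; its quadratic form is $Q_L(m,n,p)=\frac{C}{u}\big[(m+xn+yp)^2+v^2(n+zp)^2+\frac{u^3}{2v^2}p^2\big]$. Let $\mathcal F$ be the set of $f\in C^2((0,\infty))$ such that for each $k\in\{0,1,2\}$, $|f^{(k)}(r)|=O(r^{-3/2-k-\eta_k})$ as $r\to\infty$ for some $\eta_k>0$. For $f\in\mathcal F$, $E_f[L]=E_f(u,v,x,y,z):=\sum_{(m,n,p)\in\mathbb Z^3\setminus\{0\}} f(Q_L(m,n,p))=\sum_{q\in L\setminus\{0\}}f(|q|^2)$, viewed as a function of the five variables $(u,v,x,y,z)$ at fixed $V$. The FCC lattice $D_3$ of volume $V$ has parameters $(u,v,x,y,z)=(1,1,0,1/2,1/2)$; the simple cubic lattice $\mathbb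 Z^3$ of volume $V$ has parameters $(2^{1/3},1,0,0,0)$; $D_3^*$ denotes the BCC lattice (the dual lattice of the FCC lattice) rescaled to volume $V$. Criticality/local optimality of a lattice among Bravais lattices of volume $V$ means criticality/local optimality of $E_f$ as a function of $(u,v,x,y,z)$ at its parameters. *)

theory Defs
  imports "HOL-Analysis.Analysis" "HOL-Library.Landau_Symbols"
begin

definition class_F :: "(real \<Rightarrow> real) \<Rightarrow> bool" where
  "class_F f \<longleftrightarrow>
     (\<exists>f1 f2 :: real \<Rightarrow> real.
        (\<forall>r>0. (f has_real_derivative f1 r) (at r)) \<and>
        (\<forall>r>0. (f1 has_real_derivative f2 r) (at r)) \<and>
        continuous_on {0<..} f2 \<and>
        (\<exists>\<eta>>0. f \<in> O[at_top](\<lambda>r. r powr (-3/2 - \<eta>))) \<and>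
        (\<exists>\<eta>>0. f1 \<in> O[at_top](\<lambda>r. r powr (-3/2 - 1 - \<eta>))) \<and>
        (\<exists>\<eta>>0. f2 \<in> O[at_top](\<lambda>r. r powr (-3/2 - 2 - \<eta>))))"

definition constC :: "real \<Rightarrow> real" where
  "constC V = V powr (2/3) * 2 powr (1/3)"

definition QL :: "real \<Rightarrow> real \<times> real \<times> real \<times> real \<times> real \<Rightarrow> int \<times> int \<times> int \<Rightarrow> real" where
  "QL V w k = (case w of (u, v, x, y, z) \<Rightarrow> case k of (m, n, p) \<Rightarrow>
      constC V / u * ((m + x * n + y * p)^2 + v^2 * (n + z * p)^2 + u^3 / (2 * v^2) * p^2))"

definition Ef :: "(real \<Rightarrow> real) \<Rightarrow> real \<Rightarrow> real \<times> real \<times> real \<times> real \<times> real \<Rightarrow> real" where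
  "Ef f V w = (\<Sum>\<^sub>\<infinity>k\<in>(UNIV - {(0,0,0)}). f (QL V w k))"

definition FCC_params :: "real \<times> real \<times> real \<times> real \<times> real" where
  "FCC_params = (1, 1, 0, 1/2, 1/2)"
definition BCC_params :: "real \<times> real \<times> real \<times> real \<times> real" where
  "BCC_params = (2 powr (-1/3), 1, 0, 1/2, 1/2)"
definition SC_params :: "real \<times> real \<times> real \<times> real \<times> real" where
  "SC_params = (2 powr (1/3), 1, 0, 0, 0)"

end

theory Submission
  imports Defs
begin

lemma summable_on_bound:
  fixes f :: "'i \<Rightarrow> real"
  assumes "g summable_on A" "\<And>x. x\<in>A \<Longrightarrow> \<bar>f x\<bar> \<le> g x"
  shows "f summable_on A"
proof -
  have "(\<lambda>x. norm (f x)) summable_on A"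
    by (rule Infinite_Sum.abs_summable_on_comparison_test'[OF assms(1)]) (use assms(2) in simp)
  then show ?thesis by (subst summable_on_iff_abs_summable_on_real)
qed

lemma summable_on_diff':
  fixes f g :: "'i \<Rightarrow> real"
  assumes "f summable_on A" "g summable_on A"
  shows "(\<lambda>x. f x - g x) summable_on A"
proof -
  have "(\<lambda>x. f x + - g x) summable_on A"
    using assms by (intro summable_on_add) (auto simp: summable_on_uminus)
  then show ?thesis by simp
qed

lemma infsum_diff':
  fixes f g :: "'i \<Rightarrow> real"
  assumes "f summable_on A" "g summable_on A"
  shows "infsum (\<lambda>x. f x - g x) A = infsum f A - infsum g A"
proof -
  have "infsum (\<lambda>x. f x + - g x) A = infsum f A + infsum (\<lambda>x. - g x) A"
    using assms by (intro infsum_add) (auto simp: summable_on_uminus)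
  then show ?thesis by (simp add: infsum_uminus)
qed

lemma infsum_has_derivative_at:
  fixes \<phi> :: "'i \<Rightarrow> 'a::{real_normed_vector,perfect_space} \<Rightarrow> real"
  assumes S: "open S" "convex S" "w0 \<in> S"
  and der: "\<And>i w. i\<in>I \<Longrightarrow> w\<in>S \<Longrightarrow> (\<phi> i has_derivative D i w) (at w)"
  and bnd: "\<And>i w h. i\<in>I \<Longrightarrow> w\<in>S \<Longrightarrow> \<bar>D i w h\<bar> \<le> B i * norm h"
  and Bpos: "\<And>i. i\<in>I \<Longrightarrow> B i \<ge> 0"
  and Bs: "B summable_on I"
  and sm: "\<And>w. w\<in>S \<Longrightarrow> (\<lambda>i. \<phi> i w) summable_on I"
  shows "((\<lambda>w. \<Sum>\<^sub>\<infinity>i\<in>I. \<phi> i w) has_derivative (\<lambda>h. \<Sum>\<^sub>\<infinity>i\<in>I. D i w0 h)) (at w0)"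
proof -
  have lin: "bounded_linear (D i w0)" if "i\<in>I" for i
    using der[OF that S(3)] by (rule has_derivative_bounded_linear)
  have Dsum: "(\<lambda>i. D i w0 h) summable_on I" for h
  proof -
    have "(\<lambda>i. B i * norm h) summable_on I" using Bs by (rule summable_on_cmult_left)
    then show ?thesis by (rule summable_on_bound) (use bnd S(3) in auto)
  qed
  define L where "L = (\<lambda>h. \<Sum>\<^sub>\<infinity>i\<in>I. D i w0 h)"
  have bl: "bounded_linear L"
  proof (rule bounded_linear_intro[where K="infsum B I"])
    fix x y
    have "L (x + y) = (\<Sum>\<^sub>\<infinity>i\<in>I. D i w0 x + D i w0 y)"
      unfolding L_def by (rule infsum_cong) (use lin in \<open>simp add: linear_simps\<close>)
    also have "\<dots> = L x + L y" unfolding L_def by (rule infsum_add) (use Dsum in auto)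
    finally show "L (x + y) = L x + L y" .
  next
    fix r x
    have "L (r *\<^sub>R x) = (\<Sum>\<^sub>\<infinity>i\<in>I. r * D i w0 x)"
      unfolding L_def by (rule infsum_cong) (use lin in \<open>simp add: linear_simps\<close>)
    also have "\<dots> = r *\<^sub>R L x" unfolding L_def by (subst infsum_cmult_right) (use Dsum in auto)
    finally show "L (r *\<^sub>R x) = r *\<^sub>R L x" .
  next
    fix x
    have "norm (L x) \<le> (\<Sum>\<^sub>\<infinity>i\<in>I. B i * norm x)"
      unfolding L_def
      by (rule norm_infsum_le[OF has_sum_infsum has_sum_infsum])
         (use Dsum Bs summable_on_cmult_left bnd S(3) in auto)
    also have "\<dots> = norm x * infsum B I" by (subst infsum_cmult_left) (use Bs in auto)
    finally show "norm (L x) \<le> norm x * infsum B I" .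
  qed
  have mvt: "\<bar>\<phi> i y - \<phi> i w0\<bar> \<le> B i * norm (y - w0)" if "i\<in>I" "y\<in>S" for i y
  proof -
    have "norm (\<phi> i y - \<phi> i w0) \<le> B i * norm (y - w0)"
    proof (rule differentiable_bound[OF S(2) _ _ that(2) S(3)])
      fix x assume "x\<in>S"
      from der[OF that(1) \<open>x\<in>S\<close>] show "(\<phi> i has_derivative D i x) (at x within S)"
        by (rule has_derivative_at_withinI)
      show "onorm (D i x) \<le> B i" by (rule onorm_le) (use bnd that(1) \<open>x\<in>S\<close> in auto)
    qed
    then show ?thesis by simp
  qed
  show ?thesis
    unfolding has_derivative_at_alt
  proof (intro conjI allI impI)
    show "bounded_linear (\<lambda>h. \<Sum>\<^sub>\<infinity>i\<in>I. D i w0 h)" using bl unfolding L_def .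
    fix e :: real assume e: "e > 0"
    have "(sum B \<longlongrightarrow> infsum B I) (finite_subsets_at_top I)"
      using has_sum_infsum[OF Bs] unfolding has_sum_def .
    then have "\<forall>\<^sub>F F in finite_subsets_at_top I. dist (sum B F) (infsum B I) < e/4"
      by (rule tendstoD) (use e in simp)
    then obtain F where F: "finite F" "F \<subseteq> I" "dist (sum B F) (infsum B I) < e/4"
      unfolding eventually_finite_subsets_at_top by blast
    have BIF: "B summable_on (I - F)" by (rule summable_on_subset[OF Bs]) auto
    have "infsum B I = infsum B F + infsum B (I - F)"
      using infsum_Un_disjoint[of B F "I - F"] F BIF by (simp add: Un_absorb1)
    then have tail: "infsum B (I - F) < e/4" using F(1,3) by (simp add: dist_real_def)
    have "((\<lambda>w. \<Sum>i\<in>F. \<phi> i w) has_derivative (\<lambda>h. \<Sum>i\<in>F. D i w0 h)) (at w0)"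
      by (rule has_derivative_sum) (use der F(2) S(3) in auto)
    then have "\<forall>e>0. \<exists>d>0. \<forall>y. norm (y - w0) < d \<longrightarrow>
        norm ((\<Sum>i\<in>F. \<phi> i y) - (\<Sum>i\<in>F. \<phi> i w0) - (\<Sum>i\<in>F. D i w0 (y - w0))) \<le> e * norm (y - w0)"
      unfolding has_derivative_at_alt by blast
    moreover have "e/2 > 0" using e by simp
    ultimately obtain d1 where d1: "d1 > 0" "\<And>y. norm (y - w0) < d1 \<Longrightarrow>
        norm ((\<Sum>i\<in>F. \<phi> i y) - (\<Sum>i\<in>F. \<phi> i w0) - (\<Sum>i\<in>F. D i w0 (y - w0))) \<le> e/2 * norm (y - w0)"
      by blast
    obtain d2 where d2: "d2 > 0" "ball w0 d2 \<subseteq> S" using S(1,3) open_contains_ball by blast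
    show "\<exists>d>0. \<forall>y. norm (y - w0) < d \<longrightarrow>
         norm ((\<Sum>\<^sub>\<infinity>i\<in>I. \<phi> i y) - (\<Sum>\<^sub>\<infinity>i\<in>I. \<phi> i w0) - (\<Sum>\<^sub>\<infinity>i\<in>I. D i w0 (y - w0))) \<le> e * norm (y - w0)"
    proof (intro exI[of _ "min d1 d2"] conjI allI impI)
      show "min d1 d2 > 0" using d1 d2 by simp
      fix y assume y: "norm (y - w0) < min d1 d2"
      then have yS: "y \<in> S" using d2 by (auto simp: dist_norm norm_minus_commute)
      define g where "g i = \<phi> i y - \<phi> i w0 - D i w0 (y - w0)" for i
      have gs: "g summable_on A" if "A \<subseteq> I" for A
      proof -
        have "g summable_on I" unfolding g_def
          by (intro summable_on_diff' sm Dsum yS S(3))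
        then show ?thesis by (rule summable_on_subset[OF _ that])
      qed
      have eq: "(\<Sum>\<^sub>\<infinity>i\<in>I. \<phi> i y) - (\<Sum>\<^sub>\<infinity>i\<in>I. \<phi> i w0) - (\<Sum>\<^sub>\<infinity>i\<in>I. D i w0 (y - w0)) = infsum g I"
        unfolding g_def by (subst infsum_diff', (intro summable_on_diff' sm Dsum yS S(3))+,
              subst infsum_diff', (intro sm yS S(3))+) simp
      have "infsum g I = infsum g F + infsum g (I - F)"
        using infsum_Un_disjoint[of g F "I - F"] F gs by (simp add: Un_absorb1)
      also have "infsum g F = (\<Sum>i\<in>F. \<phi> i y) - (\<Sum>i\<in>F. \<phi> i w0) - (\<Sum>i\<in>F. D i w0 (y - w0))"
        using F(1) unfolding g_def by (simp add: sum_subtractf)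
      finally have split: "infsum g I = \<dots> + infsum g (I - F)" .
      have n1: "norm (infsum g F) \<le> e/2 * norm (y - w0)"
        using d1(2)[of y] y F(1) unfolding g_def by (simp add: sum_subtractf)
      have "norm (infsum g (I - F)) \<le> (\<Sum>\<^sub>\<infinity>i\<in>I - F. 2 * norm (y - w0) * B i)"
      proof (rule norm_infsum_le[OF has_sum_infsum has_sum_infsum])
        show "g summable_on I - F" by (rule gs) auto
        show "(\<lambda>i. 2 * norm (y - w0) * B i) summable_on I - F"
          using BIF by (rule summable_on_cmult_right)
        fix i assume i: "i \<in> I - F"
        have "\<bar>D i w0 (y - w0)\<bar> \<le> B i * norm (y - w0)" using bnd i S(3) by blast
        moreover have "\<bar>g i\<bar> \<le> \<bar>\<phi> i y - \<phi> i w0\<bar> + \<bar>D i w0 (y - w0)\<bar>"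
          unfolding g_def by (rule abs_triangle_ineq4)
        moreover have "\<bar>\<phi> i y - \<phi> i w0\<bar> \<le> B i * norm (y - w0)" using mvt[of i y] i yS by blast
        ultimately have "\<bar>g i\<bar> \<le> B i * norm (y - w0) + B i * norm (y - w0)" by linarith
        then show "norm (g i) \<le> 2 * norm (y - w0) * B i" by (simp add: algebra_simps)
      qed
      also have "\<dots> = 2 * norm (y - w0) * infsum B (I - F)"
        by (subst infsum_cmult_right) (use BIF in auto)
      also have "\<dots> \<le> 2 * norm (y - w0) * (e/4)"
        using tail by (intro mult_left_mono) auto
      finally have n2: "norm (infsum g (I - F)) \<le> e/2 * norm (y - w0)" by simp
      have "norm (infsum g I) \<le> norm (infsum g F) + norm (infsum g (I - F))"
        using infsum_Un_disjoint[of g F "I - F"] F gs by (simp add: Un_absorb1 norm_triangle_ineq)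
      with n1 n2 have "norm (infsum g I) \<le> e * norm (y - w0)" by linarith
      with eq show "norm ((\<Sum>\<^sub>\<infinity>i\<in>I. \<phi> i y) - (\<Sum>\<^sub>\<infinity>i\<in>I. \<phi> i w0) - (\<Sum>\<^sub>\<infinity>i\<in>I. D i w0 (y - w0))) \<le> e * norm (y - w0)"
        by simp
    qed
  qed
qed

lemma sum1d:
  fixes \<beta> :: real assumes b: "\<beta> > 1/2"
  shows "(\<lambda>m::int. (1 + (real_of_int m)^2) powr (-\<beta>)) summable_on UNIV"
proof -
  define h where "h n = (1 + (real n)^2) powr (-\<beta>)" for n :: nat
  have "summable (\<lambda>n. real n powr (-2*\<beta>))" using b by (subst summable_real_powr_iff) simp
  then have s1: "summable (\<lambda>n. real (Suc n) powr (-2*\<beta>))"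
    by (subst summable_Suc_iff) 
  have "summable h"
  proof (rule summable_comparison_test'[where g="\<lambda>n. 2 powr \<beta> * real (Suc n) powr (-2*\<beta>)"])
    show "summable (\<lambda>n. 2 powr \<beta> * real (Suc n) powr (-2*\<beta>))" using s1 by (rule summable_mult)
    fix n :: nat assume "0 \<le> n"
    have le: "(real (Suc n))^2 / 2 \<le> 1 + (real n)^2"
      using sum_squares_bound[of "real n" 1] by (simp add: power2_eq_square field_simps)
    have pos: "0 < (real (Suc n))^2 / 2" by simp
    have "h n \<le> ((real (Suc n))^2 / 2) powr (-\<beta>)"
      unfolding h_def by (rule powr_mono2') (use b le pos in auto)
    also have "\<dots> = ((real (Suc n))^2) powr (-\<beta>) / 2 powr (-\<beta>)"
      by (rule powr_divide; simp)
    also have "((real (Suc n))^2) powr (-\<beta>) = real (Suc n) powr (-2*\<beta>)"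
    proof -
      have e: "(real (Suc n))^2 = real (Suc n) powr 2" by (subst powr_numeral) auto
      show ?thesis unfolding e by (simp only: powr_powr) (simp add: mult.commute)
    qed
    also have "real (Suc n) powr (-2*\<beta>) / 2 powr (-\<beta>) = 2 powr \<beta> * real (Suc n) powr (-2*\<beta>)"
      by (simp add: powr_minus divide_inverse)
    finally show "norm (h n) \<le> 2 powr \<beta> * real (Suc n) powr (-2*\<beta>)"
      unfolding h_def by simp
  qed
  then have hs: "h summable_on UNIV"
    by (rule summable_nonneg_imp_summable_on) (simp add: h_def)
  define g where "g = (\<lambda>m::int. (1 + (real_of_int m)^2) powr (-\<beta>))"
  have "g summable_on (int ` UNIV)"
    by (subst summable_on_reindex) (use hs[unfolded h_def] in \<open>auto simp: g_def o_def\<close>)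
  moreover have "g summable_on ((\<lambda>n. - int n) ` UNIV)"
    by (subst summable_on_reindex) (use hs[unfolded h_def] in \<open>auto simp: g_def o_def inj_on_def\<close>)
  ultimately have "g summable_on (int ` UNIV \<union> (\<lambda>n. - int n) ` UNIV)"
    by (rule summable_on_union)
  moreover have "int ` UNIV \<union> (\<lambda>n. - int n) ` UNIV = UNIV"
  proof -
    have "x \<in> int ` UNIV \<union> (\<lambda>n. - int n) ` UNIV" for x :: int
    proof (cases "x \<ge> 0")
      case True then show ?thesis by (metis UnI1 nonneg_int_cases rangeI)
    next
      case False then have "x = - int (nat (-x))" by simp
      then show ?thesis by blast
    qed
    then show ?thesis by blast
  qed
  ultimately show ?thesis unfolding g_def by simp
qed

lemma summable_prod_nonneg:
  fixes a b :: "_ \<Rightarrow> real"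
  assumes "a summable_on A" "b summable_on B" "\<And>x. x\<in>A \<Longrightarrow> a x \<ge> 0" "\<And>y. y\<in>B \<Longrightarrow> b y \<ge> 0"
  shows "(\<lambda>(x,y). a x * b y) summable_on (A \<times> B)"
proof (rule summable_on_SigmaI[where g="\<lambda>x. a x * infsum b B"])
  show "\<And>x. x \<in> A \<Longrightarrow> ((\<lambda>y. case (x, y) of (x, y) \<Rightarrow> a x * b y) has_sum a x * infsum b B) B"
    using assms(2) by (auto intro: has_sum_cmult_right)
  show "(\<lambda>x. a x * infsum b B) summable_on A" using assms(1) by (rule summable_on_cmult_left)
  show "\<And>x y. x \<in> A \<Longrightarrow> y \<in> B \<Longrightarrow> 0 \<le> (case (x, y) of (x, y) \<Rightarrow> a x * b y)"
    using assms(3,4) by auto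
qed

definition Nk :: "int \<times> int \<times> int \<Rightarrow> real" where
  "Nk k = (case k of (m,n,p) \<Rightarrow> real_of_int m ^2 + real_of_int n^2 + real_of_int p^2)"

definition K0 :: "(int \<times> int \<times> int) set" where "K0 = UNIV - {(0,0,0)}"

lemma Nk_ge1: "k \<in> K0 \<Longrightarrow> Nk k \<ge> 1"
proof -
  assume "k \<in> K0"
  obtain m n p where k0: "k = (m,n,p)" by (cases k) auto
  with \<open>k \<in> K0\<close> have k: "k = (m,n,p)" "m \<noteq> 0 \<or> n \<noteq> 0 \<or> p \<noteq> 0" by (auto simp: K0_def)
  have "m^2 + n^2 + p^2 \<ge> (1::int)"
    using k(2) by (smt (verit, best) power2_less_eq_zero_iff zero_le_power2)
  then have "real_of_int (m^2 + n^2 + p^2) \<ge> 1" by linarith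
  then show ?thesis by (simp add: Nk_def k)
qed

lemma sum3d:
  fixes \<alpha> :: real assumes a: "\<alpha> > 3/2"
  shows "(\<lambda>k. Nk k powr (-\<alpha>)) summable_on K0"
proof -
  define g where "g = (\<lambda>m::int. (1 + (real_of_int m)^2) powr (-(\<alpha>/3)))"
  have gs: "g summable_on UNIV" unfolding g_def by (rule sum1d) (use a in simp)
  have "(\<lambda>(n,p). g n * g p) summable_on (UNIV \<times> UNIV)"
    by (rule summable_prod_nonneg) (use gs in \<open>auto simp: g_def\<close>)
  then have "(\<lambda>(m,q). g m * (case q of (n,p) \<Rightarrow> g n * g p)) summable_on (UNIV \<times> UNIV)"
    by (intro summable_prod_nonneg) (use gs in \<open>auto simp: g_def\<close>)
  then have all: "(\<lambda>(m,n,p). g m * (g n * g p)) summable_on UNIV"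
    by (simp add: case_prod_beta')
  have sub: "(\<lambda>(m,n,p). g m * (g n * g p)) summable_on K0"
    using all summable_on_subset by blast
  have sub2: "(\<lambda>k. 4 powr \<alpha> * (case k of (m,n,p) \<Rightarrow> g m * (g n * g p))) summable_on K0"
    using sub by (rule summable_on_cmult_right)
  show ?thesis
  proof (rule summable_on_comparison_test[OF sub2])
    fix k assume k: "k \<in> K0"
    obtain m n p where kk: "k = (m,n,p)" by (cases k) auto
    have N1: "Nk k \<ge> 1" using Nk_ge1 k .
    show "0 \<le> Nk k powr - \<alpha>" by simp
    define A where "A = 1 + (real_of_int m)^2"
    define B where "B = 1 + (real_of_int n)^2"
    define C where "C = 1 + (real_of_int p)^2"
    have A1: "A \<ge> 1" "B \<ge> 1" "C \<ge> 1" by (auto simp: A_def B_def C_def)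
    have "A * B * C \<le> (4 * Nk k)^3"
    proof -
      have sq: "0 \<le> (real_of_int m)^2" "0 \<le> (real_of_int n)^2" "0 \<le> (real_of_int p)^2" by simp_all
      have Ne: "Nk k = (real_of_int m)^2 + (real_of_int n)^2 + (real_of_int p)^2" by (simp add: Nk_def kk)
      have "A \<le> 4 * Nk k" unfolding A_def Ne using sq N1[unfolded Ne] by (smt (verit))
      moreover have "B \<le> 4 * Nk k" unfolding B_def Ne using sq N1[unfolded Ne] by (smt (verit))
      moreover have "C \<le> 4 * Nk k" unfolding C_def Ne using sq N1[unfolded Ne] by (smt (verit))
      ultimately have "A * B * C \<le> (4 * Nk k) * (4 * Nk k) * (4 * Nk k)"
        using A1 by (intro mult_mono) auto
      then show ?thesis by (simp add: power3_eq_cube)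
    qed
    then have "(A * B * C) powr (\<alpha>/3) \<le> ((4 * Nk k)^3) powr (\<alpha>/3)"
      using A1 a by (intro powr_mono2) auto
    also have "\<dots> = (4 * Nk k) powr \<alpha>"
    proof -
      have e: "(4 * Nk k)^3 = (4 * Nk k) powr 3" using N1 by (subst powr_numeral) auto
      show ?thesis unfolding e by (simp only: powr_powr) simp
    qed
    finally have le: "(A * B * C) powr (\<alpha>/3) \<le> 4 powr \<alpha> * Nk k powr \<alpha>"
      using N1 by (simp add: powr_mult)
    have "Nk k powr -\<alpha> = 4 powr \<alpha> / (4 powr \<alpha> * Nk k powr \<alpha>)"
      using N1 by (simp add: powr_minus divide_simps)
    also have "\<dots> \<le> 4 powr \<alpha> / (A * B * C) powr (\<alpha>/3)"
      using le A1 N1 by (intro divide_left_mono) auto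
    also have "\<dots> = 4 powr \<alpha> * (g m * (g n * g p))"
      using A1 by (simp add: g_def A_def[symmetric] B_def[symmetric] C_def[symmetric] powr_minus
          powr_mult divide_simps)
    finally show "Nk k powr - \<alpha> \<le> 4 powr \<alpha> * (case k of (m,n,p) \<Rightarrow> g m * (g n * g p))"
      by (simp add: kk)
  qed
qed

definition DQ :: "real \<Rightarrow> real \<times> real \<times> real \<times> real \<times> real \<Rightarrow> int \<times> int \<times> int \<Rightarrow> real \<times> real \<times> real \<times> real \<times> real \<Rightarrow> real" where
  "DQ V w k h = (case w of (u, v, x, y, z) \<Rightarrow> case k of (m, n, p) \<Rightarrow>
     let A = m + x * n + y * p; B = n + z * p in
     constC V * (fst h * (-(A^2)/u^2 - v^2*B^2/u^2 + u*p^2/v^2)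
       + fst (snd h) * (2 * v * B^2/u - u^2*p^2/v^3)
       + fst (snd (snd h)) * (2*A*n/u) + fst (snd (snd (snd h))) * (2*A*p/u)
       + snd (snd (snd (snd h))) * (2 * v^2*B*p/u)))"

lemma QL_has_derivative:
  assumes "fst w \<noteq> 0" "fst (snd w) \<noteq> 0"
  shows "((\<lambda>w. QL V w k) has_derivative DQ V w k) (at w)"
proof -
  obtain m n p where k: "k = (m,n,p)" by (cases k) auto
  define M where "M = real_of_int m"
  define N where "N = real_of_int n"
  define P where "P = real_of_int p"
  have eq: "(\<lambda>w. QL V w k) = (\<lambda>w. constC V / fst w * ((M + fst (snd (snd w)) * N + fst (snd (snd (snd w))) * P)^2
      + (fst (snd w))^2 * (N + snd (snd (snd (snd w))) * P)^2 + (fst w)^3 / (2 * (fst (snd w))^2) * P^2))"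
    by (auto simp: QL_def k M_def N_def P_def split: prod.splits)
  obtain u v x y z where w: "w = (u,v,x,y,z)" by (cases w) auto
  have u: "u \<noteq> 0" and v: "v \<noteq> 0" using assms w by auto
  show ?thesis unfolding eq
    apply (rule has_derivative_eq_rhs)
     apply (rule derivative_eq_intros refl | simp add: w u v)+
    apply (rule ext)
    apply (simp add: DQ_def w k M_def[symmetric] N_def[symmetric] P_def[symmetric] Let_def)
    apply (simp add: field_simps u v power2_eq_square power3_eq_cube)
    done
qed

lemma cs3:
  fixes a1 a2 a3 b1 b2 b3 :: real
  shows "(a1*b1+a2*b2+a3*b3)^2 \<le> (a1^2+a2^2+a3^2)*(b1^2+b2^2+b3^2)"
proof -
  have "(a1^2+a2^2+a3^2)*(b1^2+b2^2+b3^2) - (a1*b1+a2*b2+a3*b3)^2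
      = (a1*b2-a2*b1)^2 + (a1*b3-a3*b1)^2 + (a2*b3-a3*b2)^2"
    by (simp add: power2_eq_square algebra_simps)
  moreover have "0 \<le> (a1*b2-a2*b1)^2 + (a1*b3-a3*b1)^2 + (a2*b3-a3*b2)^2" by simp
  ultimately show ?thesis by linarith
qed

lemma abs_prod_le: "\<bar>a * b\<bar> \<le> (a^2 + b^2) / (2::real)"
  using sum_squares_bound[of "\<bar>a\<bar>" "\<bar>b\<bar>"] by (simp add: abs_mult)

lemma lower_bound_core:
  fixes u v x y z M N P C :: real
  assumes u: "1/2 < u" "u < 2" and v: "1/2 < v" "v < 2"
    and xyz: "\<bar>x\<bar> < 1" "\<bar>y\<bar> < 1" "\<bar>z\<bar> < 1" and C: "C \<ge> 0"
  shows "C * (M^2 + N^2 + P^2) / 288 \<le> C / u * ((M + x*N + y*P)^2 + v^2 * (N + z*P)^2 + u^3/(2* v^2) * P^2)"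
proof -
  define A where "A = M + x*N + y*P"
  define B where "B = N + z*P"
  define S where "S = A^2 + B^2 + P^2"
  have N2: "N^2 \<le> 2 * (B^2 + P^2)"
  proof -
    have "N^2 = (1*B + (-z)*P + 0*0)^2" by (simp add: B_def)
    also have "\<dots> \<le> (1^2 + (-z)^2 + 0^2) * (B^2 + P^2 + 0^2)" by (rule cs3)
    also have "\<dots> = (1 + z^2) * (B^2 + P^2)" by simp
    also have "\<dots> \<le> 2 * (B^2 + P^2)"
    proof (rule mult_right_mono)
      have "z^2 \<le> 1" using xyz(3) by (simp add: abs_square_le_1)
      then show "1 + z^2 \<le> (2::real)" by simp
    qed simp
    finally show ?thesis .
  qed
  have M2: "M^2 \<le> 6 * S"
  proof -
    have "M^2 = (1*A + (-x)*B + (x*z - y)*P)^2" by (simp add: A_def B_def algebra_simps)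
    also have "\<dots> \<le> (1^2 + (-x)^2 + (x*z-y)^2) * S" unfolding S_def by (rule cs3)
    also have "\<dots> \<le> 6 * S"
    proof (rule mult_right_mono)
      have "x^2 \<le> 1" using xyz(1) by (simp add: abs_square_le_1)
      have "\<bar>x*z\<bar> \<le> 1" unfolding abs_mult by (rule mult_le_one) (use xyz in auto)
      then have "\<bar>x*z - y\<bar> \<le> 2" using xyz(2) by linarith
      then have "(x*z-y)^2 \<le> 2^2" by (metis abs_le_square_iff abs_numeral)
      with \<open>x^2 \<le> 1\<close> show "1^2 + (-x)^2 + (x*z-y)^2 \<le> (6::real)" by simp
    qed (simp add: S_def)
    finally show ?thesis .
  qed
  have NS: "M^2 + N^2 + P^2 \<le> 9 * S" using M2 N2 zero_le_power2[of A] zero_le_power2[of B] unfolding S_def by (smt (verit))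
  have u0: "u > 0" and v0: "v > 0" using u v by auto
  have v2: "v^2 > 1/4"
  proof -
    have "(1/2)^2 < v^2" by (rule power_strict_mono) (use v in auto)
    then show ?thesis by (simp add: power2_eq_square)
  qed
  have u2: "u^2 > 1/4"
  proof -
    have "(1/2)^2 < u^2" by (rule power_strict_mono) (use u in auto)
    then show ?thesis by (simp add: power2_eq_square)
  qed
  have v2' : "v^2 < 4"
  proof -
    have "v^2 < 2^2" by (rule power_strict_mono) (use v in auto)
    then show ?thesis by simp
  qed
  have c1: "1/32 \<le> 1/u" using u by (simp add: field_simps)
  have c2: "1/32 \<le> v^2/u" using u v2 by (simp add: field_simps)
  have c3: "1/32 \<le> u^2/(2* v^2)" using u2 v2' v0 by (simp add: field_simps)
  have eqQ: "C / u * (A^2 + v^2 * B^2 + u^3/(2* v^2) * P^2) = C * ((1/u) * A^2 + (v^2/u) * B^2 + (u^2/(2* v^2)) * P^2)"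
    using u0 v0 by (simp add: field_simps power2_eq_square power3_eq_cube)
  have "S/32 \<le> (1/u) * A^2 + (v^2/u) * B^2 + (u^2/(2* v^2)) * P^2"
  proof -
    have "(1/32) * A^2 \<le> (1/u) * A^2" by (rule mult_right_mono[OF c1]) simp
    moreover have "(1/32) * B^2 \<le> (v^2/u) * B^2" by (rule mult_right_mono[OF c2]) simp
    moreover have "(1/32) * P^2 \<le> (u^2/(2* v^2)) * P^2" by (rule mult_right_mono[OF c3]) simp
    ultimately show ?thesis by (simp add: S_def)
  qed
  then have "C * (S/32) \<le> C * ((1/u) * A^2 + (v^2/u) * B^2 + (u^2/(2* v^2)) * P^2)"
    using C by (rule mult_left_mono)
  moreover have "C * (M^2 + N^2 + P^2) / 288 \<le> C * (S/32)"
  proof -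
    have "C * (M^2 + N^2 + P^2) \<le> C * (9 * S)" by (rule mult_left_mono[OF NS C])
    then show ?thesis by linarith
  qed
  ultimately show ?thesis using eqQ unfolding A_def B_def by linarith
qed

lemma mm3:
  fixes a b c a' b' c' :: real
  assumes "0\<le>a" "a\<le>a'" "0\<le>b" "b\<le>b'" "0\<le>c" "c\<le>c'"
  shows "a*b*c \<le> a'*b'*c'"
  using assms by (meson mult_mono mult_nonneg_nonneg order_trans)

lemma hprod: "\<bar>h\<bar> \<le> hn \<Longrightarrow> \<bar>c\<bar> \<le> cb \<Longrightarrow> \<bar>h * c\<bar> \<le> hn * (cb::real)"
  unfolding abs_mult by (rule mult_mono) auto

lemma upper_bound_core:
  fixes u v x y z M N P C hn h1 h2 h3 h4 h5 :: real
  assumes u: "1/2 < u" "u < 2" and v: "1/2 < v" "v < 2"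
    and xyz: "\<bar>x\<bar> < 1" "\<bar>y\<bar> < 1" "\<bar>z\<bar> < 1" and C: "C \<ge> 0"
    and h: "\<bar>h1\<bar> \<le> hn" "\<bar>h2\<bar> \<le> hn" "\<bar>h3\<bar> \<le> hn" "\<bar>h4\<bar> \<le> hn" "\<bar>h5\<bar> \<le> hn"
  shows "\<bar>C * (h1 * (-((M + x*N + y*P)^2)/u^2 - v^2*(N + z*P)^2/u^2 + u*P^2/v^2)
       + h2 * (2 * v * (N + z*P)^2/u - u^2*P^2/v^3)
       + h3 * (2*(M + x*N + y*P)*N/u) + h4 * (2*(M + x*N + y*P)*P/u)
       + h5 * (2 * v^2*(N + z*P)*P/u))\<bar> \<le> 200 * C * (M^2 + N^2 + P^2) * hn"
proof -
  define A where "A = M + x*N + y*P"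
  define B where "B = N + z*P"
  define Nn where "Nn = M^2 + N^2 + P^2"
  have hn0: "hn \<ge> 0" using h(1) by argo
  have Nn0: "Nn \<ge> 0" by (simp add: Nn_def)
  have A2: "A^2 \<le> 3 * Nn"
  proof -
    have "A^2 = (1*M + x*N + y*P)^2" by (simp add: A_def)
    also have "\<dots> \<le> (1^2 + x^2 + y^2) * Nn" unfolding Nn_def by (rule cs3)
    also have "\<dots> \<le> 3 * Nn"
    proof (rule mult_right_mono)
      have "x^2 \<le> 1" "y^2 \<le> 1" using xyz by (auto simp: abs_square_le_1)
      then show "1^2 + x^2 + y^2 \<le> (3::real)" by simp
    qed (rule Nn0)
    finally show ?thesis .
  qed
  have B2: "B^2 \<le> 2 * Nn"
  proof -
    have "B^2 = (0*M + 1*N + z*P)^2" by (simp add: B_def)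
    also have "\<dots> \<le> (0^2 + 1^2 + z^2) * Nn" unfolding Nn_def by (rule cs3)
    also have "\<dots> \<le> 2 * Nn"
    proof (rule mult_right_mono)
      have "z^2 \<le> 1" using xyz by (auto simp: abs_square_le_1)
      then show "0^2 + 1^2 + z^2 \<le> (2::real)" by simp
    qed (rule Nn0)
    finally show ?thesis .
  qed
  have P2: "P^2 \<le> Nn" and N2: "N^2 \<le> Nn" unfolding Nn_def
    using zero_le_power2[of M] zero_le_power2[of N] zero_le_power2[of P] by argo+
  have AN: "\<bar>A*N\<bar> \<le> 2 * Nn" using abs_prod_le[of A N] A2 N2 by argo
  have AP: "\<bar>A*P\<bar> \<le> 2 * Nn" using abs_prod_le[of A P] A2 P2 by argo
  have BP: "\<bar>B*P\<bar> \<le> 3/2 * Nn" using abs_prod_le[of B P] B2 P2 by argo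
  define iu where "iu = 1/u"
  define iv where "iv = 1/v"
  have iu: "0 \<le> iu" "iu \<le> 2" using u by (auto simp: iu_def field_simps)
  have iv: "0 \<le> iv" "iv \<le> 2" using v by (auto simp: iv_def field_simps)
  have iu2: "iu^2 \<le> 4" using power_mono[OF iu(2) iu(1), of 2] by simp
  have iv2: "iv^2 \<le> 4" using power_mono[OF iv(2) iv(1), of 2] by simp
  have iv3: "iv^3 \<le> 8" using power_mono[OF iv(2) iv(1), of 3] by simp
  have v2: "v^2 \<le> 4" using power_mono[of v 2 2] v by simp
  have u2: "u^2 \<le> 4" using power_mono[of u 2 2] u by simp
  have u0: "u \<noteq> 0" and v0: "v \<noteq> 0" using u v by auto
  have cu: "\<bar>-(A^2)/u^2 - v^2*B^2/u^2 + u*P^2/v^2\<bar> \<le> 52 * Nn"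
  proof -
    have e: "-(A^2)/u^2 - v^2*B^2/u^2 + u*P^2/v^2 = -(A^2*iu^2*1) - v^2*B^2*iu^2 + u*P^2*iv^2"
      by (simp add: iu_def iv_def field_simps)
    have t1: "A^2*iu^2*1 \<le> (3*Nn)*4*1" by (rule mm3) (use A2 iu2 in auto)
    have t2: "v^2*B^2*iu^2 \<le> 4*(2*Nn)*4" by (rule mm3) (use B2 iu2 v2 in auto)
    have t3: "u*P^2*iv^2 \<le> 2*Nn*4" by (rule mm3) (use P2 iv2 u in auto)
    have "0 \<le> A^2*iu^2*1" "0 \<le> v^2*B^2*iu^2" "0 \<le> u*P^2*iv^2" using u by auto
    then show ?thesis unfolding e using t1 t2 t3 by argo
  qed
  have cv: "\<bar>2 * v * B^2/u - u^2*P^2/v^3\<bar> \<le> 48 * Nn"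
  proof -
    have e: "2 * v * B^2/u - u^2*P^2/v^3 = 2 * (v * B^2 * iu) - u^2*P^2*iv^3"
      by (simp add: iu_def iv_def field_simps)
    have t1: "v * B^2 * iu \<le> 2*(2*Nn)*2" by (rule mm3) (use B2 iu v in auto)
    have t2: "u^2*P^2*iv^3 \<le> 4*Nn*8" by (rule mm3) (use P2 iv3 u2 iv in auto)
    have "0 \<le> v * B^2 * iu" "0 \<le> u^2*P^2*iv^3" using v iu iv by auto
    then show ?thesis unfolding e using t1 t2 by argo
  qed
  have cx: "\<bar>2*A*N/u\<bar> \<le> 8 * Nn"
  proof -
    have "\<bar>2*A*N/u\<bar> = 2 * (\<bar>A*N\<bar> * iu)" using iu by (simp add: iu_def abs_mult field_simps)
    moreover have "\<bar>A*N\<bar> * iu \<le> (2*Nn) * 2" by (rule mult_mono) (use AN iu Nn0 in auto)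
    ultimately show ?thesis by argo
  qed
  have cy: "\<bar>2*A*P/u\<bar> \<le> 8 * Nn"
  proof -
    have "\<bar>2*A*P/u\<bar> = 2 * (\<bar>A*P\<bar> * iu)" using iu by (simp add: iu_def abs_mult field_simps)
    moreover have "\<bar>A*P\<bar> * iu \<le> (2*Nn) * 2" by (rule mult_mono) (use AP iu Nn0 in auto)
    ultimately show ?thesis by argo
  qed
  have cz: "\<bar>2 * v^2*B*P/u\<bar> \<le> 24 * Nn"
  proof -
    have "\<bar>2 * v^2*B*P/u\<bar> = 2 * (v^2 * \<bar>B*P\<bar> * iu)" using iu by (simp add: iu_def abs_mult field_simps)
    moreover have "v^2 * \<bar>B*P\<bar> * iu \<le> 4 * (3/2*Nn) * 2" by (rule mm3) (use BP iu v2 in auto)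
    ultimately show ?thesis by argo
  qed
  define S where "S = h1 * (-(A^2)/u^2 - v^2*B^2/u^2 + u*P^2/v^2)
       + h2 * (2 * v * B^2/u - u^2*P^2/v^3)
       + h3 * (2*A*N/u) + h4 * (2*A*P/u) + h5 * (2 * v^2*B*P/u)"
  have "\<bar>S\<bar> \<le> hn * (52*Nn) + hn * (48*Nn) + hn * (8*Nn) + hn * (8*Nn) + hn * (24*Nn)"
    unfolding S_def using hprod[OF h(1) cu] hprod[OF h(2) cv] hprod[OF h(3) cx]
      hprod[OF h(4) cy] hprod[OF h(5) cz] by argo
  then have "\<bar>S\<bar> \<le> 200 * Nn * hn" using hn0 Nn0 by (simp add: algebra_simps)
  then have "\<bar>C * S\<bar> \<le> C * (200 * Nn * hn)" using C by (simp add: abs_mult mult_left_mono)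
  then show ?thesis unfolding S_def A_def B_def Nn_def by (simp add: algebra_simps)
qed

lemma bigo_bound:
  fixes g :: "real \<Rightarrow> real"
  assumes q0: "q0 > 0" and cont: "continuous_on {q0..} g"
    and bo: "g \<in> O[at_top](\<lambda>r. r powr a)" and a: "a \<le> 0"
  shows "\<exists>M\<ge>0. \<forall>r\<ge>q0. \<bar>g r\<bar> \<le> M * r powr a"
proof -
  obtain c where c: "c > 0" "eventually (\<lambda>r. norm (g r) \<le> c * norm (r powr a)) at_top"
    using landau_o.bigE[OF bo] by blast
  then obtain N where N: "\<And>r. r \<ge> N \<Longrightarrow> norm (g r) \<le> c * norm (r powr a)"
    unfolding eventually_at_top_linorder by blast
  define R where "R = max N q0"
  have R0: "R > 0" "R \<ge> q0" using q0 by (auto simp: R_def)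
  have "compact (g ` {q0..R})"
    by (rule compact_continuous_image) (use cont in \<open>auto intro: continuous_on_subset\<close>)
  then obtain K where K: "\<And>r. r \<in> {q0..R} \<Longrightarrow> norm (g r) \<le> K"
    using compact_imp_bounded bounded_iff by (metis image_eqI)
  define K' where "K' = max K 0"
  have Rp: "R powr a > 0" using R0 by simp
  define M where "M = max c (K' / R powr a)"
  have M0: "M \<ge> 0" using c by (simp add: M_def)
  have "\<bar>g r\<bar> \<le> M * r powr a" if r: "r \<ge> q0" for r
  proof (cases "r \<ge> N")
    case True
    then have "\<bar>g r\<bar> \<le> c * r powr a" using N[of r] r q0 by simp
    also have "\<dots> \<le> M * r powr a" by (rule mult_right_mono) (auto simp: M_def)
    finally show ?thesis .
  next
    case False
    then have rR: "r \<in> {q0..R}" using r by (auto simp: R_def)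
    have "\<bar>g r\<bar> \<le> K'" using K[OF rR] by (simp add: K'_def)
    also have "K' = (K' / R powr a) * R powr a" using Rp by simp
    also have "\<dots> \<le> (K' / R powr a) * r powr a"
    proof (rule mult_left_mono)
      show "R powr a \<le> r powr a" by (rule powr_mono2') (use a rR q0 in auto)
      show "0 \<le> K' / R powr a" using Rp by (simp add: K'_def)
    qed
    also have "\<dots> \<le> M * r powr a" by (rule mult_right_mono) (auto simp: M_def)
    finally show ?thesis .
  qed
  with M0 show ?thesis by blast
qed

definition Bx :: "(real \<times> real \<times> real \<times> real \<times> real) set" where
  "Bx = {1/2<..<2} \<times> {1/2<..<2} \<times> {-1<..<1} \<times> {-1<..<1} \<times> {-1<..<1}"

lemma Bx_open: "open Bx" unfolding Bx_def by (intro open_Times) auto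
lemma Bx_convex: "convex Bx" unfolding Bx_def by (intro convex_Times) auto

lemma constC_pos: "V > 0 \<Longrightarrow> constC V > 0" by (simp add: constC_def)

lemma QL_lower:
  assumes "w \<in> Bx" "V > 0"
  shows "constC V * Nk k / 288 \<le> QL V w k"
proof -
  obtain u v x y z where w: "w = (u,v,x,y,z)" by (cases w) auto
  obtain m n p where k: "k = (m,n,p)" by (cases k) auto
  have b: "1/2 < u" "u < 2" "1/2 < v" "v < 2" "\<bar>x\<bar> < 1" "\<bar>y\<bar> < 1" "\<bar>z\<bar> < 1"
    using assms(1) by (auto simp: Bx_def w)
  show ?thesis
    using lower_bound_core[OF b, of "constC V" "real_of_int m" "real_of_int n" "real_of_int p"]
      constC_pos[OF assms(2)] by (simp add: QL_def Nk_def w k)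
qed

lemma nfst: "norm (fst h) \<le> norm h"
  using norm_fst_le[of "fst h" "snd h"] by simp
lemma nsnd: "norm (snd h) \<le> norm h"
  using norm_snd_le[of "snd h" "fst h"] by simp

lemma DQ_upper:
  assumes "w \<in> Bx" "V > 0"
  shows "\<bar>DQ V w k h\<bar> \<le> 200 * constC V * Nk k * norm h"
proof -
  obtain u v x y z where w: "w = (u,v,x,y,z)" by (cases w) auto
  obtain m n p where k: "k = (m,n,p)" by (cases k) auto
  have b: "1/2 < u" "u < 2" "1/2 < v" "v < 2" "\<bar>x\<bar> < 1" "\<bar>y\<bar> < 1" "\<bar>z\<bar> < 1"
    using assms(1) by (auto simp: Bx_def w)
  have hh: "\<bar>fst h\<bar> \<le> norm h" "\<bar>fst (snd h)\<bar> \<le> norm h" "\<bar>fst (snd (snd h))\<bar> \<le> norm h"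
      "\<bar>fst (snd (snd (snd h)))\<bar> \<le> norm h" "\<bar>snd (snd (snd (snd h)))\<bar> \<le> norm h"
    using nfst[of h] nsnd[of h] nfst[of "snd h"] nsnd[of "snd h"]
      nfst[of "snd (snd h)"] nsnd[of "snd (snd h)"]
      nfst[of "snd (snd (snd h))"] nsnd[of "snd (snd (snd h))"]
    by (auto intro: order_trans)
  show ?thesis
    using upper_bound_core[OF b less_imp_le[OF constC_pos[OF assms(2)]] hh,
        of "real_of_int m" "real_of_int n" "real_of_int p"]
    by (simp add: DQ_def Nk_def w k Let_def)
qed

lemma main_deriv:
  assumes F: "class_F f" and V: "V > 0"
  obtains f1 G where
   "\<And>w0. w0 \<in> Bx \<Longrightarrow> (Ef f V has_derivative (\<lambda>h. \<Sum>\<^sub>\<infinity>k\<in>K0. f1 (QL V w0 k) * DQ V w0 k h)) (at w0)"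
   "G summable_on K0" "\<And>w k. w \<in> Bx \<Longrightarrow> k \<in> K0 \<Longrightarrow> \<bar>f1 (QL V w k)\<bar> * Nk k \<le> G k"
proof -
  from F obtain f1 f2 where d0: "\<forall>r>0. (f has_real_derivative f1 r) (at r)"
    and d1: "\<forall>r>0. (f1 has_real_derivative f2 r) (at r)"
    and b0: "\<exists>\<eta>>0. f \<in> O[at_top](\<lambda>r. r powr (-3/2 - \<eta>))"
    and b1: "\<exists>\<eta>>0. f1 \<in> O[at_top](\<lambda>r. r powr (-3/2 - 1 - \<eta>))"
    unfolding class_F_def by blast
  from b0 obtain \<eta>0 where e0: "\<eta>0 > 0" "f \<in> O[at_top](\<lambda>r. r powr (-3/2 - \<eta>0))" by blast
  from b1 obtain \<eta>1 where e1: "\<eta>1 > 0" "f1 \<in> O[at_top](\<lambda>r. r powr (-3/2 - 1 - \<eta>1))" by blast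
  define a0 where "a0 = -3/2 - \<eta>0"
  define a1 where "a1 = -3/2 - 1 - \<eta>1"
  define C where "C = constC V"
  have C0: "C > 0" using V by (simp add: C_def constC_pos)
  define q where "q = C / 288"
  have q0: "q > 0" using C0 by (simp add: q_def)
  have "isCont f r" if "r \<ge> q" for r
  proof -
    have "(f has_real_derivative f1 r) (at r)" using d0 q0 that by auto
    then show ?thesis by (rule DERIV_isCont)
  qed
  then have cf: "continuous_on {q..} f" by (intro continuous_at_imp_continuous_on) auto
  have "isCont f1 r" if "r \<ge> q" for r
  proof -
    have "(f1 has_real_derivative f2 r) (at r)" using d1 q0 that by auto
    then show ?thesis by (rule DERIV_isCont)
  qed
  then have cf1: "continuous_on {q..} f1" by (intro continuous_at_imp_continuous_on) auto
  obtain M0 where M0: "M0 \<ge> 0" "\<And>r. r \<ge> q \<Longrightarrow> \<bar>f r\<bar> \<le> M0 * r powr a0"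
    using bigo_bound[OF q0 cf e0(2)[folded a0_def]] e0(1) unfolding a0_def by auto
  obtain M1 where M1: "M1 \<ge> 0" "\<And>r. r \<ge> q \<Longrightarrow> \<bar>f1 r\<bar> \<le> M1 * r powr a1"
    using bigo_bound[OF q0 cf1 e1(2)[folded a1_def]] e1(1) unfolding a1_def by auto
  define G where "G k = M0 * q powr a0 * Nk k powr a0 + M1 * q powr a1 * Nk k powr (a1+1)" for k
  have G0: "G k \<ge> 0" for k using M0 M1 by (simp add: G_def)
  have Qlow: "QL V w k \<ge> q * Nk k" if "w \<in> Bx" "k \<in> K0" for w k
    using QL_lower[OF that(1) V, of k] by (simp add: q_def C_def)
  have Qq: "QL V w k \<ge> q" if "w \<in> Bx" "k \<in> K0" for w k
  proof -
    have "q \<le> q * Nk k" using Nk_ge1[OF that(2)] q0 by simp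
    then show ?thesis using Qlow[OF that] by linarith
  qed
  have fb: "\<bar>f (QL V w k)\<bar> \<le> G k" if "w \<in> Bx" "k \<in> K0" for w k
  proof -
    have N1: "Nk k \<ge> 1" using Nk_ge1[OF that(2)] .
    have "\<bar>f (QL V w k)\<bar> \<le> M0 * (QL V w k) powr a0" using M0(2) Qq[OF that] by blast
    also have "\<dots> \<le> M0 * (q * Nk k) powr a0"
      by (intro mult_left_mono powr_mono2') (use Qlow[OF that] q0 N1 M0 e0 in \<open>auto simp: a0_def\<close>)
    also have "\<dots> = M0 * q powr a0 * Nk k powr a0" using q0 N1 by (simp add: powr_mult)
    also have "\<dots> \<le> G k" unfolding G_def using M1 q0 N1 by simp
    finally show ?thesis .
  qed
  have f1b: "\<bar>f1 (QL V w k)\<bar> * Nk k \<le> G k" if "w \<in> Bx" "k \<in> K0" for w k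
  proof -
    have N1: "Nk k \<ge> 1" using Nk_ge1[OF that(2)] .
    have "\<bar>f1 (QL V w k)\<bar> \<le> M1 * (QL V w k) powr a1" using M1(2) Qq[OF that] by blast
    also have "\<dots> \<le> M1 * (q * Nk k) powr a1"
      by (intro mult_left_mono powr_mono2') (use Qlow[OF that] q0 N1 M1 e1 in \<open>auto simp: a1_def\<close>)
    also have "\<dots> = M1 * q powr a1 * Nk k powr a1" using q0 N1 by (simp add: powr_mult)
    finally have "\<bar>f1 (QL V w k)\<bar> * Nk k \<le> M1 * q powr a1 * Nk k powr a1 * Nk k"
      using N1 by (intro mult_right_mono) auto
    also have "\<dots> = M1 * q powr a1 * Nk k powr (a1 + 1)" using N1 by (simp add: powr_add)
    also have "\<dots> \<le> G k" unfolding G_def using M0 q0 N1 by simp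
    finally show ?thesis .
  qed
  have Gs: "G summable_on K0"
  proof -
    have s0: "(\<lambda>k. Nk k powr (-(3/2 + \<eta>0))) summable_on K0" by (rule sum3d) (use e0 in simp)
    have s1: "(\<lambda>k. Nk k powr (-(3/2 + \<eta>1))) summable_on K0" by (rule sum3d) (use e1 in simp)
    have "a0 = -(3/2 + \<eta>0)" "a1 + 1 = -(3/2 + \<eta>1)" by (simp_all add: a0_def a1_def)
    then have s0': "(\<lambda>k. Nk k powr a0) summable_on K0" and s1': "(\<lambda>k. Nk k powr (a1+1)) summable_on K0"
      using s0 s1 by simp_all
    show ?thesis unfolding G_def
      by (intro summable_on_add summable_on_cmult_right s0' s1')
  qed
  have Efeq: "Ef f V = (\<lambda>w. \<Sum>\<^sub>\<infinity>k\<in>K0. f (QL V w k))"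
    by (simp add: fun_eq_iff Ef_def K0_def)
  have D: "(Ef f V has_derivative (\<lambda>h. \<Sum>\<^sub>\<infinity>k\<in>K0. f1 (QL V w0 k) * DQ V w0 k h)) (at w0)"
    if w0: "w0 \<in> Bx" for w0
    unfolding Efeq
  proof (rule infsum_has_derivative_at[where B="\<lambda>k. 200 * C * G k"])
    show "open Bx" "convex Bx" "w0 \<in> Bx" using Bx_open Bx_convex w0 by auto
    show "(\<lambda>k. 200 * C * G k) summable_on K0" using Gs by (rule summable_on_cmult_right)
    show "0 \<le> 200 * C * G k" for k using C0 G0[of k] by simp
    show "(\<lambda>k. f (QL V w k)) summable_on K0" if "w \<in> Bx" for w
      by (rule summable_on_bound[OF Gs]) (use fb that in auto)
    fix k w assume k: "k \<in> K0" and w: "w \<in> Bx"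
    have u: "fst w \<noteq> 0" "fst (snd w) \<noteq> 0" using w by (auto simp: Bx_def)
    have Qpos: "QL V w k > 0" using Qq[OF w k] q0 by linarith
    have "(f has_derivative (*) (f1 (QL V w k))) (at (QL V w k))"
      by (rule has_field_derivative_imp_has_derivative) (use d0 Qpos in auto)
    from has_derivative_compose[OF QL_has_derivative[OF u] this]
    show "((\<lambda>w. f (QL V w k)) has_derivative (\<lambda>h. f1 (QL V w k) * DQ V w k h)) (at w)" .
    fix h
    have "\<bar>f1 (QL V w k) * DQ V w k h\<bar> = \<bar>f1 (QL V w k)\<bar> * \<bar>DQ V w k h\<bar>" by (simp add: abs_mult)
    also have "\<dots> \<le> \<bar>f1 (QL V w k)\<bar> * (200 * C * Nk k * norm h)"
      by (intro mult_left_mono) (use DQ_upper[OF w V] in \<open>auto simp: C_def\<close>)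
    also have "\<dots> = 200 * C * norm h * (\<bar>f1 (QL V w k)\<bar> * Nk k)" by (simp add: algebra_simps)
    also have "\<dots> \<le> 200 * C * norm h * G k"
      by (intro mult_left_mono f1b[OF w k]) (use C0 in simp)
    finally show "\<bar>f1 (QL V w k) * DQ V w k h\<bar> \<le> 200 * C * G k * norm h" by (simp add: algebra_simps)
  qed
  show ?thesis by (rule that[OF D Gs f1b])
qed

lemma infsum_invol:
  assumes "\<And>x. x \<in> A \<Longrightarrow> \<sigma> x \<in> A" "\<And>x. \<sigma> (\<sigma> x) = x"
  shows "infsum (\<lambda>x. F (\<sigma> x)) A = infsum F A"
  by (rule infsum_reindex_bij_witness[of A \<sigma> \<sigma> A]) (use assms in auto)

definition x1 :: "int \<times> int \<times> int \<Rightarrow> real" where "x1 t = real_of_int (fst t)"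
definition x2 :: "int \<times> int \<times> int \<Rightarrow> real" where "x2 t = real_of_int (fst (snd t))"
definition x3 :: "int \<times> int \<times> int \<Rightarrow> real" where "x3 t = real_of_int (snd (snd t))"
definition sqs :: "int \<times> int \<times> int \<Rightarrow> real" where "sqs t = x1 t ^ 2 + x2 t ^ 2 + x3 t ^ 2"

lemma sym_zero:
  fixes \<Lambda> :: "(int \<times> int \<times> int) set" and G :: "real \<Rightarrow> real"
  assumes i1: "\<And>a b c. (a,b,c)\<in>\<Lambda> \<Longrightarrow> (b,a,c)\<in>\<Lambda>" and i2: "\<And>a b c. (a,b,c)\<in>\<Lambda> \<Longrightarrow> (a,c,b)\<in>\<Lambda>"
    and i3: "\<And>a b c. (a,b,c)\<in>\<Lambda> \<Longrightarrow> (-a,b,c)\<in>\<Lambda>" and i4: "\<And>a b c. (a,b,c)\<in>\<Lambda> \<Longrightarrow> (a,-b,c)\<in>\<Lambda>"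
    and sm: "(\<lambda>t. G (sqs t) * sqs t) summable_on \<Lambda>"
    and tr: "c11 + c22 + c33 = 0"
  shows "(\<Sum>\<^sub>\<infinity>t\<in>\<Lambda>. G (sqs t) * (c11 * x1 t^2 + c22 * x2 t^2 + c33 * x3 t^2
           + c12 * (x1 t * x2 t) + c13 * (x1 t * x3 t) + c23 * (x2 t * x3 t))) = 0"
proof -
  define S where "S \<phi> = (\<Sum>\<^sub>\<infinity>t\<in>\<Lambda>. G (sqs t) * \<phi> t)" for \<phi> :: "int \<times> int \<times> int \<Rightarrow> real"
  have smabs: "(\<lambda>t. \<bar>G (sqs t) * sqs t\<bar>) summable_on \<Lambda>"
    using sm by (subst (asm) summable_on_iff_abs_summable_on_real) simp
  have sq0: "sqs t \<ge> 0" for t by (simp add: sqs_def)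
  have summ: "(\<lambda>t. G (sqs t) * \<phi> t) summable_on \<Lambda>" if b: "\<And>t. \<bar>\<phi> t\<bar> \<le> sqs t" for \<phi>
  proof (rule summable_on_bound[OF smabs])
    fix t
    have "\<bar>G (sqs t) * \<phi> t\<bar> = \<bar>G (sqs t)\<bar> * \<bar>\<phi> t\<bar>" by (simp add: abs_mult)
    also have "\<dots> \<le> \<bar>G (sqs t)\<bar> * sqs t" by (intro mult_left_mono b) simp
    also have "\<dots> = \<bar>G (sqs t) * sqs t\<bar>" using sq0[of t] by (simp add: abs_mult)
    finally show "\<bar>G (sqs t) * \<phi> t\<bar> \<le> \<bar>G (sqs t) * sqs t\<bar>" .
  qed
  have hs: "((\<lambda>t. G (sqs t) * \<phi> t) has_sum S \<phi>) \<Lambda>" if b: "\<And>t. \<bar>\<phi> t\<bar> \<le> sqs t" for \<phi>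
    unfolding S_def using summ[OF b] by (rule has_sum_infsum)
  have p2: "\<And>u v w :: real. \<bar>u * v\<bar> \<le> u^2 + v^2 + w^2"
  proof -
    fix u v w :: real
    show "\<bar>u * v\<bar> \<le> u^2 + v^2 + w^2" using abs_prod_le[of u v] zero_le_power2[of w]
      zero_le_power2[of u] zero_le_power2[of v] by argo
  qed
  have b1: "\<bar>x1 t^2\<bar> \<le> sqs t" "\<bar>x2 t^2\<bar> \<le> sqs t" "\<bar>x3 t^2\<bar> \<le> sqs t" for t
    unfolding sqs_def using zero_le_power2[of "x1 t"] zero_le_power2[of "x2 t"] zero_le_power2[of "x3 t"]
    by argo+
  have b2: "\<bar>x1 t * x2 t\<bar> \<le> sqs t" "\<bar>x1 t * x3 t\<bar> \<le> sqs t" "\<bar>x2 t * x3 t\<bar> \<le> sqs t" for t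
    unfolding sqs_def using p2[of "x1 t" "x2 t" "x3 t"] p2[of "x1 t" "x3 t" "x2 t"] p2[of "x2 t" "x3 t" "x1 t"]
    by argo+
  have tot: "((\<lambda>t. c11 * (G (sqs t) * x1 t^2) + c22 * (G (sqs t) * x2 t^2) + c33 * (G (sqs t) * x3 t^2)
      + c12 * (G (sqs t) * (x1 t * x2 t)) + c13 * (G (sqs t) * (x1 t * x3 t)) + c23 * (G (sqs t) * (x2 t * x3 t)))
      has_sum (c11 * S (\<lambda>t. x1 t^2) + c22 * S (\<lambda>t. x2 t^2) + c33 * S (\<lambda>t. x3 t^2)
      + c12 * S (\<lambda>t. x1 t * x2 t) + c13 * S (\<lambda>t. x1 t * x3 t) + c23 * S (\<lambda>t. x2 t * x3 t))) \<Lambda>"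
  proof -
    have h1: "((\<lambda>t. G (sqs t) * x1 t^2) has_sum S (\<lambda>t. x1 t^2)) \<Lambda>" by (rule hs[of "\<lambda>t. x1 t^2"]) (rule b1)
    have h2: "((\<lambda>t. G (sqs t) * x2 t^2) has_sum S (\<lambda>t. x2 t^2)) \<Lambda>" by (rule hs[of "\<lambda>t. x2 t^2"]) (rule b1)
    have h3: "((\<lambda>t. G (sqs t) * x3 t^2) has_sum S (\<lambda>t. x3 t^2)) \<Lambda>" by (rule hs[of "\<lambda>t. x3 t^2"]) (rule b1)
    have h4: "((\<lambda>t. G (sqs t) * (x1 t * x2 t)) has_sum S (\<lambda>t. x1 t * x2 t)) \<Lambda>" by (rule hs[of "\<lambda>t. x1 t * x2 t"]) (rule b2)
    have h5: "((\<lambda>t. G (sqs t) * (x1 t * x3 t)) has_sum S (\<lambda>t. x1 t * x3 t)) \<Lambda>" by (rule hs[of "\<lambda>t. x1 t * x3 t"]) (rule b2)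
    have h6: "((\<lambda>t. G (sqs t) * (x2 t * x3 t)) has_sum S (\<lambda>t. x2 t * x3 t)) \<Lambda>" by (rule hs[of "\<lambda>t. x2 t * x3 t"]) (rule b2)
    show ?thesis
      using has_sum_add[OF has_sum_add[OF has_sum_add[OF has_sum_add[OF has_sum_add[OF
          has_sum_cmult_right[OF h1, of c11] has_sum_cmult_right[OF h2, of c22]] has_sum_cmult_right[OF h3, of c33]]
          has_sum_cmult_right[OF h4, of c12]] has_sum_cmult_right[OF h5, of c13]] has_sum_cmult_right[OF h6, of c23]]
      .
  qed
  define s1 where "s1 = (\<lambda>(a::int,b::int,c::int). (b,a,c))"
  define s2 where "s2 = (\<lambda>(a::int,b::int,c::int). (a,c,b))"
  define s3 where "s3 = (\<lambda>(a::int,b::int,c::int). (-a,b,c))"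
  define s4 where "s4 = (\<lambda>(a::int,b::int,c::int). (a,-b,c))"
  have m1: "s1 t \<in> \<Lambda>" "s2 t \<in> \<Lambda>" "s3 t \<in> \<Lambda>" "s4 t \<in> \<Lambda>" if "t \<in> \<Lambda>" for t
  proof -
    obtain a b c where t: "t = (a,b,c)" by (cases t) auto
    have "(a,b,c) \<in> \<Lambda>" using that t by simp
    then have "(b,a,c)\<in>\<Lambda>" "(a,c,b)\<in>\<Lambda>" "(-a,b,c)\<in>\<Lambda>" "(a,-b,c)\<in>\<Lambda>"
      by (rule i1, rule i2, rule i3, rule i4)
    then show "s1 t \<in> \<Lambda>" "s2 t \<in> \<Lambda>" "s3 t \<in> \<Lambda>" "s4 t \<in> \<Lambda>"
      by (simp_all add: s1_def s2_def s3_def s4_def t)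
  qed
  have inv: "s1 (s1 t) = t" "s2 (s2 t) = t" "s3 (s3 t) = t" "s4 (s4 t) = t" for t
    by (auto simp: s1_def s2_def s3_def s4_def split: prod.splits)
  have sqsS: "sqs (s1 t) = sqs t" "sqs (s2 t) = sqs t" "sqs (s3 t) = sqs t" "sqs (s4 t) = sqs t" for t
    by (auto simp: s1_def s2_def s3_def s4_def sqs_def x1_def x2_def x3_def split: prod.splits)
  have xs: "x1 (s1 t) = x2 t" "x2 (s2 t) = x3 t" "x1 (s3 t) = - x1 t" "x2 (s3 t) = x2 t"
      "x3 (s3 t) = x3 t" "x1 (s4 t) = x1 t" "x2 (s4 t) = - x2 t" "x3 (s4 t) = x3 t" for t
    by (auto simp: s1_def s2_def s3_def s4_def x1_def x2_def x3_def split: prod.splits)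
  have e12: "S (\<lambda>t. x2 t^2) = S (\<lambda>t. x1 t^2)"
  proof -
    have "S (\<lambda>t. x1 t^2) = (\<Sum>\<^sub>\<infinity>t\<in>\<Lambda>. G (sqs (s1 t)) * x1 (s1 t)^2)"
      unfolding S_def by (rule infsum_invol[symmetric]) (use m1 inv in auto)
    also have "\<dots> = S (\<lambda>t. x2 t^2)" unfolding S_def
      by (rule infsum_cong) (simp add: sqsS xs)
    finally show ?thesis by simp
  qed
  have e23: "S (\<lambda>t. x3 t^2) = S (\<lambda>t. x2 t^2)"
  proof -
    have "S (\<lambda>t. x2 t^2) = (\<Sum>\<^sub>\<infinity>t\<in>\<Lambda>. G (sqs (s2 t)) * x2 (s2 t)^2)"
      unfolding S_def by (rule infsum_invol[symmetric]) (use m1 inv in auto)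
    also have "\<dots> = S (\<lambda>t. x3 t^2)" unfolding S_def
      by (rule infsum_cong) (simp add: sqsS xs)
    finally show ?thesis by simp
  qed
  have odd: "S \<phi> = 0" if "\<And>t. \<phi> (\<sigma> t) = - \<phi> t" "\<And>t. sqs (\<sigma> t) = sqs t"
      "\<And>t. t \<in> \<Lambda> \<Longrightarrow> \<sigma> t \<in> \<Lambda>" "\<And>t. \<sigma> (\<sigma> t) = t" for \<phi> \<sigma>
  proof -
    have "S \<phi> = (\<Sum>\<^sub>\<infinity>t\<in>\<Lambda>. G (sqs (\<sigma> t)) * \<phi> (\<sigma> t))"
      unfolding S_def by (rule infsum_invol[symmetric]) (use that in auto)
    also have "\<dots> = (\<Sum>\<^sub>\<infinity>t\<in>\<Lambda>. - (G (sqs t) * \<phi> t))" using that(1,2) by simp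
    also have "\<dots> = - S \<phi>" unfolding S_def by (rule infsum_uminus)
    finally show ?thesis by simp
  qed
  have z4: "S (\<lambda>t. x1 t * x2 t) = 0"
    by (rule odd[where \<sigma>=s3]) (use m1 inv sqsS in \<open>simp_all add: xs\<close>)
  have z5: "S (\<lambda>t. x1 t * x3 t) = 0"
    by (rule odd[where \<sigma>=s3]) (use m1 inv sqsS in \<open>simp_all add: xs\<close>)
  have z6: "S (\<lambda>t. x2 t * x3 t) = 0"
    by (rule odd[where \<sigma>=s4]) (use m1 inv sqsS in \<open>simp_all add: xs\<close>)
  have val: "c11 * S (\<lambda>t. x1 t^2) + c22 * S (\<lambda>t. x2 t^2) + c33 * S (\<lambda>t. x3 t^2)
      + c12 * S (\<lambda>t. x1 t * x2 t) + c13 * S (\<lambda>t. x1 t * x3 t) + c23 * S (\<lambda>t. x2 t * x3 t) = 0"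
    unfolding z4 z5 z6 e23 e12
  proof -
    have "c11 * S (\<lambda>t. x1 t^2) + c22 * S (\<lambda>t. x1 t^2) + c33 * S (\<lambda>t. x1 t^2) = (c11 + c22 + c33) * S (\<lambda>t. x1 t^2)"
      by (simp add: algebra_simps)
    then show "c11 * S (\<lambda>t. x1 t^2) + c22 * S (\<lambda>t. x1 t^2) + c33 * S (\<lambda>t. x1 t^2) + c12 * 0 + c13 * 0 + c23 * 0 = 0"
      using tr by simp
  qed
  show ?thesis
    using infsumI[OF tot] val by (simp add: algebra_simps)
qed

lemma lattice_zero:
  fixes T :: "int \<times> int \<times> int \<Rightarrow> int \<times> int \<times> int"
  assumes inj: "inj_on T K0"
    and i1: "\<And>a b c. (a,b,c) \<in> T ` K0 \<Longrightarrow> (b,a,c) \<in> T ` K0"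
    and i2: "\<And>a b c. (a,b,c) \<in> T ` K0 \<Longrightarrow> (a,c,b) \<in> T ` K0"
    and i3: "\<And>a b c. (a,b,c) \<in> T ` K0 \<Longrightarrow> (-a,b,c) \<in> T ` K0"
    and i4: "\<And>a b c. (a,b,c) \<in> T ` K0 \<Longrightarrow> (a,-b,c) \<in> T ` K0"
    and Q: "\<And>k. QL V w0 k = \<kappa> * sqs (T k)"
    and DQe: "\<And>k. DQ V w0 k h = qa * x1 (T k)^2 + qb * x2 (T k)^2 + qc * x3 (T k)^2
           + qd * (x1 (T k) * x2 (T k)) + qe * (x1 (T k) * x3 (T k)) + qf * (x2 (T k) * x3 (T k))"
    and tr: "qa + qb + qc = 0"
    and bnd: "\<And>k. k \<in> K0 \<Longrightarrow> sqs (T k) \<le> cc * Nk k" and cc: "cc \<ge> 0"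
    and Gs: "G summable_on K0" and f1b: "\<And>k. k \<in> K0 \<Longrightarrow> \<bar>f1 (QL V w0 k)\<bar> * Nk k \<le> G k"
  shows "(\<Sum>\<^sub>\<infinity>k\<in>K0. f1 (QL V w0 k) * DQ V w0 k h) = 0"
proof -
  define Gf where "Gf s = f1 (\<kappa> * s)" for s
  define \<Phi> where "\<Phi> t = Gf (sqs t) * (qa * x1 t^2 + qb * x2 t^2 + qc * x3 t^2
           + qd * (x1 t * x2 t) + qe * (x1 t * x3 t) + qf * (x2 t * x3 t))" for t
  have "(\<Sum>\<^sub>\<infinity>k\<in>K0. f1 (QL V w0 k) * DQ V w0 k h) = (\<Sum>\<^sub>\<infinity>k\<in>K0. (\<Phi> \<circ> T) k)"
    by (rule infsum_cong) (simp add: \<Phi>_def Gf_def Q DQe)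
  also have "\<dots> = infsum \<Phi> (T ` K0)" by (rule infsum_reindex[OF inj, symmetric])
  also have "\<dots> = 0" unfolding \<Phi>_def
  proof (rule sym_zero[OF i1 i2 i3 i4 _ tr])
    have "((\<lambda>t. Gf (sqs t) * sqs t) \<circ> T) summable_on K0"
    proof (rule summable_on_bound)
      show "(\<lambda>k. cc * G k) summable_on K0" using Gs by (rule summable_on_cmult_right)
      fix k assume k: "k \<in> K0"
      have s0: "sqs (T k) \<ge> 0" by (simp add: sqs_def)
      have "\<bar>((\<lambda>t. Gf (sqs t) * sqs t) \<circ> T) k\<bar> = \<bar>f1 (QL V w0 k)\<bar> * sqs (T k)"
        using s0 by (simp add: Gf_def Q abs_mult)
      also have "\<dots> \<le> \<bar>f1 (QL V w0 k)\<bar> * (cc * Nk k)" by (intro mult_left_mono bnd k) simp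
      also have "\<dots> = cc * (\<bar>f1 (QL V w0 k)\<bar> * Nk k)" by (simp add: algebra_simps)
      also have "\<dots> \<le> cc * G k" by (intro mult_left_mono f1b k cc)
      finally show "\<bar>((\<lambda>t. Gf (sqs t) * sqs t) \<circ> T) k\<bar> \<le> cc * G k" .
    qed
    then show "(\<lambda>t. Gf (sqs t) * sqs t) summable_on T ` K0"
      by (subst summable_on_reindex[OF inj])
  qed
  finally show ?thesis .
qed

lemma cs3': "(a1*b1+a2*b2+a3*b3)^2 \<le> (a1^2+a2^2+a3^2)*(b1^2+b2^2+b3^2)" for a1 a2 a3 b1 b2 b3 :: real
  by (rule cs3)

lemma Nk_eq: "Nk (m,n,p) = real_of_int m^2 + real_of_int n^2 + real_of_int p^2" by (simp add: Nk_def)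

lemma FCC_zero:
  assumes Gs: "G summable_on K0" and f1b: "\<And>k. k \<in> K0 \<Longrightarrow> \<bar>f1 (QL V FCC_params k)\<bar> * Nk k \<le> G k"
  shows "(\<Sum>\<^sub>\<infinity>k\<in>K0. f1 (QL V FCC_params k) * DQ V FCC_params k h) = 0"
proof -
  define T where "T = (\<lambda>(m::int,n::int,p::int). (m+n+p, m-n, p))"
  define C where "C = constC V"
  obtain hu hv hx hy hz where h: "h = (hu,hv,hx,hy,hz)" by (cases h) auto
  show ?thesis
  proof (rule lattice_zero[where T=T and \<kappa>="C/2" and cc=6 and G=G and
      qa="C*(-hu/2 + hv/2 + hx/2)" and qb="C*(-hu/2 + hv/2 - hx/2)" and qc="C*(hu - hv)"
      and qd="C*(-hv)" and qe="C*(-hx/2 + hy + hz)" and qf="C*(-hx/2 + hy - hz)"])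
    show "inj_on T K0" unfolding T_def inj_on_def by auto
    show "(b,a,c) \<in> T ` K0" if "(a,b,c) \<in> T ` K0" for a b c
    proof -
      from that obtain m n p where k: "(m,n,p) \<in> K0" "(a,b,c) = T (m,n,p)" by auto
      show ?thesis by (rule image_eqI[where x="(m,-n-p,p)"]) (use k in \<open>auto simp: T_def K0_def\<close>)
    qed
    show "(a,c,b) \<in> T ` K0" if "(a,b,c) \<in> T ` K0" for a b c
    proof -
      from that obtain m n p where k: "(m,n,p) \<in> K0" "(a,b,c) = T (m,n,p)" by auto
      show ?thesis by (rule image_eqI[where x="(n+p,n,m-n)"]) (use k in \<open>auto simp: T_def K0_def\<close>)
    qed
    show "(-a,b,c) \<in> T ` K0" if "(a,b,c) \<in> T ` K0" for a b c
    proof -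
      from that obtain m n p where k: "(m,n,p) \<in> K0" "(a,b,c) = T (m,n,p)" by auto
      show ?thesis by (rule image_eqI[where x="(-n-p,-m-p,p)"]) (use k in \<open>auto simp: T_def K0_def\<close>)
    qed
    show "(a,-b,c) \<in> T ` K0" if "(a,b,c) \<in> T ` K0" for a b c
    proof -
      from that obtain m n p where k: "(m,n,p) \<in> K0" "(a,b,c) = T (m,n,p)" by auto
      show ?thesis by (rule image_eqI[where x="(n,m,p)"]) (use k in \<open>auto simp: T_def K0_def\<close>)
    qed
    show "QL V FCC_params k = C / 2 * sqs (T k)" for k
      by (cases k) (simp add: QL_def FCC_params_def T_def sqs_def x1_def x2_def x3_def C_def
          power2_eq_square algebra_simps)
    show "DQ V FCC_params k h = C * (- hu / 2 + hv / 2 + hx / 2) * x1 (T k)^2 + C * (- hu / 2 + hv / 2 - hx / 2) * x2 (T k)^2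
        + C * (hu - hv) * x3 (T k)^2 + C * - hv * (x1 (T k) * x2 (T k))
        + C * (- hx / 2 + hy + hz) * (x1 (T k) * x3 (T k)) + C * (- hx / 2 + hy - hz) * (x2 (T k) * x3 (T k))" for k
      by (cases k) (simp add: DQ_def FCC_params_def T_def x1_def x2_def x3_def C_def h Let_def
          power2_eq_square algebra_simps divide_simps)
    show "C * (- hu / 2 + hv / 2 + hx / 2) + C * (- hu / 2 + hv / 2 - hx / 2) + C * (hu - hv) = 0"
      by (simp add: algebra_simps)
    show "sqs (T k) \<le> 6 * Nk k" for k
    proof -
      obtain m n p where k: "k = (m,n,p)" by (cases k) auto
      define M where "M = real_of_int m"
      define N where "N = real_of_int n"
      define P where "P = real_of_int p"
      have c: "(M+N+P)^2 \<le> 3*(M^2+N^2+P^2)" using cs3[of 1 M 1 N 1 P] by simp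
      have d: "(M-N)^2 \<le> 2*(M^2+N^2+P^2)" using cs3[of 1 M "-1" N 0 P] by simp
      have e: "sqs (T k) = (M+N+P)^2 + (M-N)^2 + P^2"
        by (simp add: k T_def sqs_def x1_def x2_def x3_def M_def N_def P_def)
      have f: "Nk k = M^2+N^2+P^2" by (simp add: k Nk_def M_def N_def P_def)
      show ?thesis using c d e f zero_le_power2[of M] zero_le_power2[of N] zero_le_power2[of P] by argo
    qed
  qed (use Gs f1b in auto)
qed

lemma cube_facts:
  fixes u0 a :: real assumes u: "u0 > 0" and u3: "u0^3 = a"
  shows "u0 = a / u0^2" "u0^2 = a / u0"
proof -
  have e: "u0^3 = u0 * u0^2" "u0^3 = u0^2 * u0" by (simp_all add: power2_eq_square power3_eq_cube)
  show "u0 = a / u0^2" using u e(2) u3 by (simp add: field_simps)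
  show "u0^2 = a / u0" using u e(1) u3 by (simp add: field_simps)
qed

lemma powr_cube: "(2 powr (a::real))^3 = 2 powr (3*a)"
proof -
  have "(2 powr a)^3 = 2 powr a * 2 powr a * 2 powr a" by (simp add: power3_eq_cube)
  also have "\<dots> = 2 powr (a + a + a)" by (simp only: powr_add)
  also have "a + a + a = 3 * a" by simp
  finally show ?thesis .
qed

lemma BCC_zero:
  assumes Gs: "G summable_on K0" and f1b: "\<And>k. k \<in> K0 \<Longrightarrow> \<bar>f1 (QL V BCC_params k)\<bar> * Nk k \<le> G k"
  shows "(\<Sum>\<^sub>\<infinity>k\<in>K0. f1 (QL V BCC_params k) * DQ V BCC_params k h) = 0"
proof -
  define u0 :: real where "u0 = 2 powr (-1/3)"
  have u0: "u0 > 0" by (simp add: u0_def)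
  have u3: "u0^3 = 1/2" unfolding u0_def powr_cube by (simp add: powr_minus)
  have cf: "u0 = (1/2) / u0^2" "u0^2 = (1/2) / u0" using cube_facts[OF u0 u3] by auto
  have par: "BCC_params = (u0, 1, 0, 1/2, 1/2)" by (simp add: BCC_params_def u0_def)
  define T where "T = (\<lambda>(m::int,n::int,p::int). (2*m+p, 2*n+p, p))"
  define C where "C = constC V"
  obtain hu hv hx hy hz where h: "h = (hu,hv,hx,hy,hz)" by (cases h) auto
  show ?thesis unfolding par
  proof (rule lattice_zero[where T=T and \<kappa>="C/(4*u0)" and cc=11 and G=G and
      qa="C*(-hu/(4*u0^2))" and qb="C*(-hu/(4*u0^2) + hv/(2*u0))" and qc="C*(hu*u0 - hv*u0^2)"
      and qd="C*hx/(2*u0)" and qe="C*(-hx/(2*u0) + hy/u0)" and qf="C*hz/u0"])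
    show "inj_on T K0" unfolding T_def inj_on_def by auto
    show "(b,a,c) \<in> T ` K0" if "(a,b,c) \<in> T ` K0" for a b c
    proof -
      from that obtain m n p where k: "(m,n,p) \<in> K0" "(a,b,c) = T (m,n,p)" by auto
      show ?thesis by (rule image_eqI[where x="(n,m,p)"]) (use k in \<open>auto simp: T_def K0_def\<close>)
    qed
    show "(a,c,b) \<in> T ` K0" if "(a,b,c) \<in> T ` K0" for a b c
    proof -
      from that obtain m n p where k: "(m,n,p) \<in> K0" "(a,b,c) = T (m,n,p)" by auto
      show ?thesis by (rule image_eqI[where x="(m-n,-n,2*n+p)"]) (use k in \<open>auto simp: T_def K0_def\<close>)
    qed
    show "(-a,b,c) \<in> T ` K0" if "(a,b,c) \<in> T ` K0" for a b c
    proof -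
      from that obtain m n p where k: "(m,n,p) \<in> K0" "(a,b,c) = T (m,n,p)" by auto
      show ?thesis by (rule image_eqI[where x="(-m-p,n,p)"]) (use k in \<open>auto simp: T_def K0_def\<close>)
    qed
    show "(a,-b,c) \<in> T ` K0" if "(a,b,c) \<in> T ` K0" for a b c
    proof -
      from that obtain m n p where k: "(m,n,p) \<in> K0" "(a,b,c) = T (m,n,p)" by auto
      show ?thesis by (rule image_eqI[where x="(m,-n-p,p)"]) (use k in \<open>auto simp: T_def K0_def\<close>)
    qed
    show "QL V (u0, 1, 0, 1/2, 1/2) k = C / (4*u0) * sqs (T k)" for k
      using u0 by (cases k) (simp add: QL_def u3 T_def sqs_def x1_def x2_def x3_def C_def
          power2_eq_square field_simps)
    show "DQ V (u0, 1, 0, 1/2, 1/2) k h = C * (- hu / (4 * u0\<^sup>2)) * x1 (T k)^2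
        + C * (- hu / (4 * u0\<^sup>2) + hv / (2 * u0)) * x2 (T k)^2
        + C * (hu * u0 - hv * u0\<^sup>2) * x3 (T k)^2 + C * hx / (2 * u0) * (x1 (T k) * x2 (T k))
        + C * (- hx / (2 * u0) + hy / u0) * (x1 (T k) * x3 (T k)) + C * hz / u0 * (x2 (T k) * x3 (T k))" for k
      using u0 by (cases k) (simp add: DQ_def T_def x1_def x2_def x3_def C_def h Let_def
          power2_eq_square field_simps)
    show "C * (- hu / (4 * u0\<^sup>2)) + C * (- hu / (4 * u0\<^sup>2) + hv / (2 * u0)) + C * (hu * u0 - hv * u0\<^sup>2) = 0"
    proof -
      have "hu * u0 = hu / (2 * u0^2)" by (subst cf(1)) simp
      moreover have "hv * u0^2 = hv / (2 * u0)" by (subst cf(2)) simp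
      ultimately show ?thesis by (simp add: algebra_simps)
    qed
    show "sqs (T k) \<le> 11 * Nk k" for k
    proof -
      obtain m n p where k: "k = (m,n,p)" by (cases k) auto
      define M where "M = real_of_int m"
      define N where "N = real_of_int n"
      define P where "P = real_of_int p"
      have c: "(2*M+P)^2 \<le> 5*(M^2+N^2+P^2)" using cs3[of 2 M 0 N 1 P] by simp
      have d: "(2*N+P)^2 \<le> 5*(M^2+N^2+P^2)" using cs3[of 0 M 2 N 1 P] by simp
      have e: "sqs (T k) = (2*M+P)^2 + (2*N+P)^2 + P^2"
        by (simp add: k T_def sqs_def x1_def x2_def x3_def M_def N_def P_def)
      have f: "Nk k = M^2+N^2+P^2" by (simp add: k Nk_def M_def N_def P_def)
      show ?thesis using c d e f zero_le_power2[of M] zero_le_power2[of N] zero_le_power2[of P] by argo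
    qed
  qed (use Gs f1b par in auto)
qed

lemma SC_zero:
  assumes Gs: "G summable_on K0" and f1b: "\<And>k. k \<in> K0 \<Longrightarrow> \<bar>f1 (QL V SC_params k)\<bar> * Nk k \<le> G k"
  shows "(\<Sum>\<^sub>\<infinity>k\<in>K0. f1 (QL V SC_params k) * DQ V SC_params k h) = 0"
proof -
  define u0 :: real where "u0 = 2 powr (1/3)"
  have u0: "u0 > 0" by (simp add: u0_def)
  have u3: "u0^3 = 2" unfolding u0_def powr_cube by simp
  have cf: "u0 = 2 / u0^2" "u0^2 = 2 / u0" using cube_facts[OF u0 u3] by auto
  have par: "SC_params = (u0, 1, 0, 0, 0)" by (simp add: SC_params_def u0_def)
  define T where "T = (\<lambda>k::int\<times>int\<times>int. k)"
  define C where "C = constC V"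
  obtain hu hv hx hy hz where h: "h = (hu,hv,hx,hy,hz)" by (cases h) auto
  show ?thesis unfolding par
  proof (rule lattice_zero[where T=T and \<kappa>="C/u0" and cc=1 and G=G and
      qa="C*(-hu/u0^2)" and qb="C*(-hu/u0^2 + 2*hv/u0)" and qc="C*(hu*u0 - hv*u0^2)"
      and qd="C*(2*hx/u0)" and qe="C*(2*hy/u0)" and qf="C*(2*hz/u0)"])
    show "inj_on T K0" unfolding T_def inj_on_def by auto
    show "(b,a,c) \<in> T ` K0" if "(a,b,c) \<in> T ` K0" for a b c using that by (auto simp: T_def K0_def)
    show "(a,c,b) \<in> T ` K0" if "(a,b,c) \<in> T ` K0" for a b c using that by (auto simp: T_def K0_def)
    show "(-a,b,c) \<in> T ` K0" if "(a,b,c) \<in> T ` K0" for a b c using that by (auto simp: T_def K0_def)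
    show "(a,-b,c) \<in> T ` K0" if "(a,b,c) \<in> T ` K0" for a b c using that by (auto simp: T_def K0_def)
    show "QL V (u0, 1, 0, 0, 0) k = C / u0 * sqs (T k)" for k
      using u0 by (cases k) (simp add: QL_def u3 T_def sqs_def x1_def x2_def x3_def C_def)
    show "DQ V (u0, 1, 0, 0, 0) k h = C * (- hu / u0\<^sup>2) * x1 (T k)^2
        + C * (- hu / u0\<^sup>2 + 2 * hv / u0) * x2 (T k)^2
        + C * (hu * u0 - hv * u0\<^sup>2) * x3 (T k)^2 + C * (2 * hx / u0) * (x1 (T k) * x2 (T k))
        + C * (2 * hy / u0) * (x1 (T k) * x3 (T k)) + C * (2 * hz / u0) * (x2 (T k) * x3 (T k))" for k
      using u0 by (cases k) (simp add: DQ_def T_def x1_def x2_def x3_def C_def h Let_def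
          power2_eq_square field_simps)
    show "C * (- hu / u0\<^sup>2) + C * (- hu / u0\<^sup>2 + 2 * hv / u0) + C * (hu * u0 - hv * u0\<^sup>2) = 0"
    proof -
      have "hu * u0 = 2 * hu / u0^2" by (subst cf(1)) simp
      moreover have "hv * u0^2 = 2 * hv / u0" by (subst cf(2)) simp
      ultimately show ?thesis by (simp add: algebra_simps)
    qed
    show "sqs (T k) \<le> 1 * Nk k" for k by (cases k) (simp add: T_def sqs_def Nk_def x1_def x2_def x3_def)
  qed (use Gs f1b par in auto)
qed

lemma FCC_in: "FCC_params \<in> Bx" by (simp add: FCC_params_def Bx_def)

lemma BCC_in: "BCC_params \<in> Bx"
proof -
  have a: "2 powr (-1) < 2 powr (-1/3::real)" by (subst powr_less_cancel_iff) auto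
  have b: "2 powr (-1/3::real) < 2 powr 1" by (subst powr_less_cancel_iff) auto
  show ?thesis using a b by (simp add: BCC_params_def Bx_def powr_minus)
qed

lemma SC_in: "SC_params \<in> Bx"
proof -
  have a: "2 powr (-1) < 2 powr (1/3::real)" by (subst powr_less_cancel_iff) auto
  have b: "2 powr (1/3::real) < 2 powr 1" by (subst powr_less_cancel_iff) auto
  show ?thesis using a b by (simp add: SC_params_def Bx_def powr_minus)
qed

theorem proposition3p2:
  fixes f :: "real \<Rightarrow> real" and V :: real
  assumes "class_F f" and "V > 0"
  shows "(Ef f V has_derivative (\<lambda>_. 0)) (at FCC_params)
       \<and> (Ef f V has_derivative (\<lambda>_. 0)) (at BCC_params)
       \<and> (Ef f V has_derivative (\<lambda>_. 0)) (at SC_params)"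
proof -
  obtain f1 G where D: "\<And>w0. w0 \<in> Bx \<Longrightarrow> (Ef f V has_derivative (\<lambda>h. \<Sum>\<^sub>\<infinity>k\<in>K0. f1 (QL V w0 k) * DQ V w0 k h)) (at w0)"
    and Gs: "G summable_on K0" and f1b: "\<And>w k. w \<in> Bx \<Longrightarrow> k \<in> K0 \<Longrightarrow> \<bar>f1 (QL V w k)\<bar> * Nk k \<le> G k"
    using main_deriv[OF assms] by blast
  have 1: "(\<lambda>h. \<Sum>\<^sub>\<infinity>k\<in>K0. f1 (QL V FCC_params k) * DQ V FCC_params k h) = (\<lambda>_. 0)"
    by (rule ext, rule FCC_zero[OF Gs f1b[OF FCC_in]])
  have 2: "(\<lambda>h. \<Sum>\<^sub>\<infinity>k\<in>K0. f1 (QL V BCC_params k) * DQ V BCC_params k h) = (\<lambda>_. 0)"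
    by (rule ext, rule BCC_zero[OF Gs f1b[OF BCC_in]])
  have 3: "(\<lambda>h. \<Sum>\<^sub>\<infinity>k\<in>K0. f1 (QL V SC_params k) * DQ V SC_params k h) = (\<lambda>_. 0)"
    by (rule ext, rule SC_zero[OF Gs f1b[OF SC_in]])
  show ?thesis using D[OF FCC_in] D[OF BCC_in] D[OF SC_in] unfolding 1 2 3 by blast
qed

end
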